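(* $\delta=\dfrac{\cos\psi}{\cos\tfrac23\psi}$, where $\delta=\phi'$.
   Context: Let $0<\kappa<1$. Let $F(\tfrac16,\tfrac56;\tfrac12;\cdot)$ denote the Gauss hypergeometric function. Define $u$ as a function of $\phi$ near $0$ by $u=\int_0^{\sin\phi}F(\tfrac16,\tfrac56;\tfrac12;\kappa^2t^2)\,\frac{dt}{\sqrt{1-t^2}}$; near the origin (fixing $0$) this inverts to a holomorphic function $u\mapsto\phi(u)$ with $\phi(0)=0$. Let $\psi$ be the holomorphic function near $0$ with $\psi(0)=0$ and $\sin\psi=\kappa\sin\phi$. All functions are regarded as functions of $u$ on a small disc about $0$; $\delta=\phi'=d\phi/du$. *)

theory Defs
  imports "HOL-Complex_Analysis.Complex_Analysis"
begin

definition hyp2f1 :: "complex \<Rightarrow> complex \<Rightarrow> complex \<Rightarrow> complex \<Rightarrow> complex" where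
  "hyp2f1 a b c z =
     (\<Sum>n. pochhammer a n * pochhammer b n / (pochhammer c n * fact n) * z ^ n)"

definition uint :: "real \<Rightarrow> complex \<Rightarrow> complex" where
  "uint \<kappa> \<phi> = contour_integral (linepath 0 (sin \<phi>))
     (\<lambda>t. hyp2f1 (1/6) (5/6) (1/2) ((complex_of_real \<kappa>)\<^sup>2 * t\<^sup>2) / csqrt (1 - t\<^sup>2))"

end

theory Submission
  imports Defs "HOL-Analysis.FPS_Convergence"
begin


definition hp :: "nat \<Rightarrow> complex" where
  "hp n = pochhammer (1/6) n * pochhammer (5/6) n / (pochhammer (1/2) n * fact n)"

definition hA :: "complex fps" where "hA = Abs_fps hp"

lemma hyp_eval: "hyp2f1 (1/6) (5/6) (1/2) z = eval_fps hA z"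
  by (simp add: hyp2f1_def eval_fps_def hA_def hp_def)

lemma poch_half_nz: "pochhammer (1/2::complex) n \<noteq> 0"
proof -
  have "pochhammer (1/2::complex) n = of_real (pochhammer (1/2) n)"
    by (simp add: pochhammer_of_real[symmetric])
  moreover have "pochhammer (1/2::real) n > 0" by (intro pochhammer_pos) auto
  ultimately show ?thesis by simp
qed

lemma hp_Suc: "hp (Suc n) = hp n * (((of_nat n + 1/6) * (of_nat n + 5/6)) / ((of_nat n + 1/2) * (of_nat n + 1)))"
proof -
  have h: "(of_nat n + 1/2::complex) \<noteq> 0"
  proof
    assume "(of_nat n + 1/2::complex) = 0"
    hence "Re (of_nat n + 1/2::complex) = 0" by simp
    thus False by simp
  qed
  have h2: "(of_nat n + 1::complex) \<noteq> 0" by (metis of_nat_Suc of_nat_eq_0_iff nat.distinct(1) add.commute)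
  show ?thesis using poch_half_nz[of n] h h2
    unfolding hp_def by (simp add: pochhammer_Suc field_simps)
qed

lemma hp_rec: "hp (Suc n) * ((of_nat n + 1) * (of_nat n + 1/2)) = hp n * ((of_nat n + 1/6) * (of_nat n + 5/6))"
proof -
  have h: "(of_nat n + 1/2::complex) \<noteq> 0"
  proof
    assume "(of_nat n + 1/2::complex) = 0"
    hence "Re (of_nat n + 1/2::complex) = 0" by simp
    thus False by simp
  qed
  have h2: "(of_nat n + 1::complex) \<noteq> 0" by (metis of_nat_Suc of_nat_eq_0_iff nat.distinct(1) add.commute)
  have "(of_nat n + 1/2) * (of_nat n + 1::complex) \<noteq> 0" using h h2 by simp
  hence "hp n * (((of_nat n + 1/6) * (of_nat n + 5/6)) / ((of_nat n + 1/2) * (of_nat n + 1))) * ((of_nat n + 1/2) * (of_nat n + 1))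
     = hp n * ((of_nat n + 1/6) * (of_nat n + 5/6))" by simp
  thus ?thesis unfolding hp_Suc by (simp add: algebra_simps)
qed

lemma hp_bound: "norm (hp n) \<le> 1"
proof (induction n)
  case 0 then show ?case by (simp add: hp_def)
next
  case (Suc n)
  have eq: "((of_nat n + 1/6) * (of_nat n + 5/6)) / ((of_nat n + 1/2) * (of_nat n + 1)) =
     (of_real (((real n + 1/6) * (real n + 5/6)) / ((real n + 1/2) * (real n + 1))) :: complex)"
    by simp
  have le: "((real n + 1/6) * (real n + 5/6)) / ((real n + 1/2) * (real n + 1)) \<le> 1"
  proof -
    have "(real n + 1/6) * (real n + 5/6) \<le> (real n + 1/2) * (real n + 1)" by (simp add: field_simps)
    moreover have "(real n + 1/2) * (real n + 1) > 0" by simp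
    ultimately show ?thesis by simp
  qed
  have ge: "((real n + 1/6) * (real n + 5/6)) / ((real n + 1/2) * (real n + 1)) \<ge> 0"
    by simp
  have "norm (hp n) * (((real n + 1/6) * (real n + 5/6)) / ((real n + 1/2) * (real n + 1))) \<le> 1"
    by (rule mult_le_one[OF Suc.IH ge le])
  then show ?case unfolding hp_Suc eq norm_mult norm_of_real
    using ge by (simp only: abs_of_nonneg)
qed

lemma hA_radius: "fps_conv_radius hA \<ge> 1"
  unfolding fps_conv_radius_def hA_def fps_nth_Abs_fps
proof (rule conv_radius_geI_ex')
  fix r :: real assume r: "0 < r" "ereal r < 1"
  hence r1: "r < 1" by simp
  show "summable (\<lambda>n. hp n * complex_of_real r ^ n)"
  proof (rule summable_norm_cancel, rule summable_comparison_test')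
    show "summable (\<lambda>n. r ^ n)" using r r1 by (intro summable_geometric) auto
    fix n show "norm (norm (hp n * complex_of_real r ^ n)) \<le> r ^ n"
      using hp_bound[of n] r by (simp add: norm_mult norm_power mult_left_le_one_le)
  qed
qed

lemma hA_ode_fps:
  "fps_X * fps_deriv (fps_deriv hA) - fps_X * (fps_X * fps_deriv (fps_deriv hA))
   + fps_const (1/2) * fps_deriv hA - fps_const 2 * (fps_X * fps_deriv hA) - fps_const (5/36) * hA = 0"
proof (rule fps_ext)
  fix n
  show "(fps_X * fps_deriv (fps_deriv hA) - fps_X * (fps_X * fps_deriv (fps_deriv hA))
   + fps_const (1/2) * fps_deriv hA - fps_const 2 * (fps_X * fps_deriv hA) - fps_const (5/36) * hA) $ n = 0 $ n"
  proof (cases n)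
    case 0
    then show ?thesis using hp_rec[of 0] by (simp add: hA_def)
  next
    case (Suc m)
    note nm = Suc
    show ?thesis
    proof (cases m)
      case 0
      then show ?thesis using hp_rec[of 1] nm by (simp add: hA_def algebra_simps)
    next
      case (Suc k)
      show ?thesis using hp_rec[of n] nm Suc by (simp add: hA_def field_simps)
    qed
  qed
qed

lemma rad_mult: "norm z < fps_conv_radius f \<Longrightarrow> norm z < fps_conv_radius g \<Longrightarrow> norm z < fps_conv_radius (f*g)"
  using fps_conv_radius_mult[of f g] by (metis min_less_iff_conj order.strict_trans2)
lemma rad_add: "norm z < fps_conv_radius f \<Longrightarrow> norm z < fps_conv_radius g \<Longrightarrow> norm z < fps_conv_radius (f+g)"
  using fps_conv_radius_add[of f g] by (metis min_less_iff_conj order.strict_trans2)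
lemma rad_diff: "norm z < fps_conv_radius f \<Longrightarrow> norm z < fps_conv_radius g \<Longrightarrow> norm z < fps_conv_radius (f-g)"
  using fps_conv_radius_diff[of f g] by (metis min_less_iff_conj order.strict_trans2)

lemma rad_hA: "norm (z::complex) < 1 \<Longrightarrow> norm z < fps_conv_radius hA"
  using hA_radius by (metis ereal_less(3) order.strict_trans2 one_ereal_def)

lemma rad_hA1: "norm (z::complex) < 1 \<Longrightarrow> norm z < fps_conv_radius (fps_deriv hA)"
  using rad_hA fps_conv_radius_deriv[of hA] by (meson order.strict_trans2)
lemma rad_hA2: "norm (z::complex) < 1 \<Longrightarrow> norm z < fps_conv_radius (fps_deriv (fps_deriv hA))"
  using rad_hA1 fps_conv_radius_deriv[of "fps_deriv hA"] by (meson order.strict_trans2)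

definition "H = eval_fps hA"
definition "H1 = eval_fps (fps_deriv hA)"
definition "H2 = eval_fps (fps_deriv (fps_deriv hA))"

lemma hA_ode:
  assumes "norm z < 1"
  shows "z * H2 z - z * (z * H2 z) + 1/2 * H1 z - 2 * (z * H1 z) - 5/36 * H z = 0"
proof -
  note r = rad_hA[OF assms] rad_hA1[OF assms] rad_hA2[OF assms]
  have "eval_fps (fps_X * fps_deriv (fps_deriv hA) - fps_X * (fps_X * fps_deriv (fps_deriv hA))
   + fps_const (1/2) * fps_deriv hA - fps_const 2 * (fps_X * fps_deriv hA) - fps_const (5/36) * hA) z = 0"
    by (simp only: hA_ode_fps eval_fps_0)
  thus ?thesis
    unfolding H_def H1_def H2_def
    by (simp add: r rad_mult rad_add rad_diff eval_fps_mult eval_fps_add eval_fps_diff)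
qed




lemma dH: "norm w < 1 \<Longrightarrow> (H has_field_derivative H1 w) (at w)"
  unfolding H_def H1_def by (intro has_field_derivative_eval_fps rad_hA)
lemma dH1: "norm w < 1 \<Longrightarrow> (H1 has_field_derivative H2 w) (at w)"
  unfolding H2_def H1_def by (intro has_field_derivative_eval_fps rad_hA1)

lemma dHc: "(g has_field_derivative g') (at x) \<Longrightarrow> norm (g x) < 1 \<Longrightarrow>
   ((\<lambda>x. H (g x)) has_field_derivative H1 (g x) * g') (at x)"
  using DERIV_chain2[OF dH] by blast
lemma dH1c: "(g has_field_derivative g') (at x) \<Longrightarrow> norm (g x) < 1 \<Longrightarrow>
   ((\<lambda>x. H1 (g x)) has_field_derivative H2 (g x) * g') (at x)"
  using DERIV_chain2[OF dH1] by blast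

definition "PP z = cos z * H (sin z ^ 2)"
definition "QQ z = - sin z * H (sin z ^ 2) + 2 * sin z * cos z ^ 2 * H1 (sin z ^ 2)"

lemma dPP: "norm (sin z ^ 2) < 1 \<Longrightarrow> (PP has_field_derivative QQ z) (at z)"
  unfolding PP_def[abs_def]
  apply (rule derivative_eq_intros dHc | simp)+
  apply (simp add: QQ_def algebra_simps power2_eq_square)
  done

lemma dQQ: "norm (sin z ^ 2) < 1 \<Longrightarrow> (QQ has_field_derivative (-(4/9) * PP z)) (at z)"
proof -
  assume n: "norm (sin z ^ 2) < 1"
  have E: "sin z ^ 2 * H2 (sin z ^ 2) - sin z ^ 2 * (sin z ^ 2 * H2 (sin z ^ 2)) + 1/2 * H1 (sin z ^ 2)
     - 2 * (sin z ^ 2 * H1 (sin z ^ 2)) - 5/36 * H (sin z ^ 2) = 0"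
    by (rule hA_ode[OF n])
  have sc: "sin z ^ 2 + cos z ^ 2 = 1" by simp
  show ?thesis
    unfolding QQ_def[abs_def]
    apply (rule derivative_eq_intros dHc dH1c | simp add: n)+
    using E sc unfolding PP_def by algebra
qed

lemma H0: "H 0 = 1"
  by (simp add: H_def eval_fps_at_0 hA_def hp_def)

lemma hyp_identity: "\<exists>\<rho>>0. \<forall>z\<in>ball 0 \<rho>. norm (sin z ^ 2) < 1 \<and> PP z = cos (2/3 * z)"
proof -
  have "open (UNIV \<inter> (\<lambda>z. sin z ^ 2) -` ball (0::complex) 1)"
  proof -
    have "continuous_on UNIV (sin::complex\<Rightarrow>complex)"
      using continuous_on_sin[OF continuous_on_id, of "UNIV::complex set"] by simp
    thus ?thesis by (intro continuous_open_preimage continuous_intros) auto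
  qed
  moreover have "0 \<in> UNIV \<inter> (\<lambda>z. sin z ^ 2) -` ball (0::complex) 1" by simp
  ultimately obtain \<rho> where \<rho>: "\<rho> > 0" "ball 0 \<rho> \<subseteq> UNIV \<inter> (\<lambda>z. sin z ^ 2) -` ball (0::complex) 1"
    by (meson openE)
  have n: "norm (sin z ^ 2) < 1" if "z \<in> ball 0 \<rho>" for z :: complex
    using \<rho>(2) that by auto
  define k :: complex where "k = 2/3"
  define AA where "AA z = PP z * cos (k*z) - 3/2 * QQ z * sin (k*z)" for z
  define BB where "BB z = PP z * sin (k*z) + 3/2 * QQ z * cos (k*z)" for z
  have dA: "(AA has_field_derivative 0) (at z within ball 0 \<rho>)" if "z \<in> ball 0 \<rho>" for z
  proof -
    have "(AA has_field_derivative 0) (at z)"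
      unfolding AA_def[abs_def]
      apply (rule derivative_eq_intros dPP dQQ n[OF that] refl)+
      apply (simp add: k_def algebra_simps)
      done
    thus ?thesis by (rule has_field_derivative_at_within)
  qed
  have dB: "(BB has_field_derivative 0) (at z within ball 0 \<rho>)" if "z \<in> ball 0 \<rho>" for z
  proof -
    have "(BB has_field_derivative 0) (at z)"
      unfolding BB_def[abs_def]
      apply (rule derivative_eq_intros dPP dQQ n[OF that] refl)+
      apply (simp add: k_def algebra_simps)
      done
    thus ?thesis by (rule has_field_derivative_at_within)
  qed
  obtain ca where ca: "\<forall>x\<in>ball 0 \<rho>. AA x = ca"
    using has_field_derivative_zero_constant[OF convex_ball dA] by blast
  obtain cb where cb: "\<forall>x\<in>ball 0 \<rho>. BB x = cb"
    using has_field_derivative_zero_constant[OF convex_ball dB] by blast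
  have 0: "0 \<in> ball (0::complex) \<rho>" using \<rho> by simp
  have "AA 0 = 1" by (simp add: AA_def PP_def QQ_def H0)
  hence ca1: "ca = 1" using ca 0 by auto
  have "BB 0 = 0" by (simp add: BB_def PP_def QQ_def H0)
  hence cb0: "cb = 0" using cb 0 by auto
  show ?thesis
  proof (intro exI[of _ \<rho>] conjI ballI \<rho>(1) n)
    fix z :: complex assume z: "z \<in> ball 0 \<rho>"
    have a: "AA z = 1" and b: "BB z = 0" using ca cb z ca1 cb0 by auto
    have "PP z = AA z * cos (k*z) + BB z * sin (k*z)"
    proof -
      show ?thesis using sin_cos_squared_add[of "k*z"] unfolding AA_def BB_def by algebra
    qed
    thus "PP z = cos (2/3 * z)" using a b by (simp add: k_def)
  qed
qed




definition "ff \<kappa> = (\<lambda>t. hyp2f1 (1/6) (5/6) (1/2) ((complex_of_real \<kappa>)\<^sup>2 * t\<^sup>2) / csqrt (1 - t\<^sup>2))"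

lemma ff_H: "ff \<kappa> t = H ((complex_of_real \<kappa>)\<^sup>2 * t\<^sup>2) / csqrt (1 - t\<^sup>2)"
  by (simp add: ff_def hyp_eval H_def)

lemma small1: assumes "0 < \<kappa>" "\<kappa> < 1" "norm t < 1"
  shows "norm ((complex_of_real \<kappa>)\<^sup>2 * t\<^sup>2) < 1"
proof -
  have "norm ((complex_of_real \<kappa>)\<^sup>2 * t\<^sup>2) = \<kappa>^2 * norm t ^ 2"
    by (simp add: norm_mult norm_power)
  also have "\<dots> < 1"
  proof -
    have "\<kappa>^2 < 1" using assms by (simp add: power_less_one_iff abs_less_iff)
    moreover have "norm t ^ 2 \<le> 1" using assms(3) by (simp add: power_le_one)
    moreover have "\<kappa>^2 * norm t ^ 2 \<le> \<kappa>^2"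
      using \<open>norm t ^ 2 \<le> 1\<close> by (rule mult_left_le) simp
    ultimately show ?thesis by linarith
  qed
  finally show ?thesis .
qed

lemma small2: assumes "norm (t::complex) < 1" shows "0 < Re (1 - t\<^sup>2)"
proof -
  have "Re (t\<^sup>2) \<le> norm (t\<^sup>2)" by (rule complex_Re_le_cmod)
  also have "\<dots> = norm t ^ 2" by (simp add: norm_power)
  also have "\<dots> < 1" using assms by (simp add: power_less_one_iff)
  finally show ?thesis by simp
qed





lemma ff_holo: assumes "0 < \<kappa>" "\<kappa> < 1" shows "ff \<kappa> holomorphic_on ball 0 1"
proof -
  have "ff \<kappa> field_differentiable at t" if t: "t \<in> ball 0 1" for t
  proof -
    have nt: "norm t < 1" using t by simp
    have d1: "((\<lambda>t. H ((complex_of_real \<kappa>)\<^sup>2 * t\<^sup>2)) has_field_derivative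
        H1 ((complex_of_real \<kappa>)\<^sup>2 * t\<^sup>2) * ((complex_of_real \<kappa>)\<^sup>2 * (2 * t))) (at t)"
    proof -
      have "((\<lambda>t. t^2) has_field_derivative 2*t) (at t)" by (auto intro!: derivative_eq_intros)
      hence "((\<lambda>t. (complex_of_real \<kappa>)\<^sup>2 * t\<^sup>2) has_field_derivative (complex_of_real \<kappa>)\<^sup>2 * (2 * t)) (at t)"
        by (rule DERIV_cmult)
      from dHc[OF this] small1[OF assms nt] show ?thesis by simp
    qed
    have nr: "1 - t\<^sup>2 \<notin> \<real>\<^sub>\<le>\<^sub>0" using small2[OF nt] by (simp add: complex_nonpos_Reals_iff)
    have d2: "((\<lambda>t. csqrt (1 - t\<^sup>2)) has_field_derivative (- (2 * t)) / (2 * csqrt (1 - t\<^sup>2))) (at t)"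
    proof -
      have "((\<lambda>t. t^2) has_field_derivative 2*t) (at t)" by (auto intro!: derivative_eq_intros)
      from DERIV_diff[OF DERIV_const this]
      have "((\<lambda>t. 1 - t\<^sup>2) has_field_derivative - (2 * t)) (at t)" by simp
      from has_field_derivative_csqrt'[OF this] nr show ?thesis by simp
    qed
    have nz: "csqrt (1 - t\<^sup>2) \<noteq> 0"
    proof
      assume "csqrt (1 - t\<^sup>2) = 0"
      hence "1 - t\<^sup>2 = 0" by simp
      thus False using small2[OF nt] by simp
    qed
    have eq: "ff \<kappa> = (\<lambda>t. H ((complex_of_real \<kappa>)\<^sup>2 * t\<^sup>2) / csqrt (1 - t\<^sup>2))"
      by (rule ext) (rule ff_H)
    show ?thesis
      unfolding eq field_differentiable_def by (rule exI, rule DERIV_divide[OF d1 d2 nz])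
  qed
  thus ?thesis by (simp add: holomorphic_on_def field_differentiable_at_within)
qed

lemma uint_prim:
  assumes "0 < \<kappa>" "\<kappa> < 1"
  obtains F where "\<And>x. x \<in> ball 0 1 \<Longrightarrow> (F has_field_derivative ff \<kappa> x) (at x)"
    "\<And>p. sin p \<in> ball 0 1 \<Longrightarrow> uint \<kappa> p = F (sin p) - F 0"
proof -
  obtain F where F: "\<And>x. x \<in> ball 0 1 \<Longrightarrow> (F has_field_derivative ff \<kappa> x) (at x within ball 0 1)"
    using holomorphic_convex_primitive'[OF convex_ball open_ball ff_holo[OF assms]] by blast
  have F': "(F has_field_derivative ff \<kappa> x) (at x)" if "x \<in> ball 0 1" for x
    using F[OF that] unfolding at_within_open[OF that open_ball] .
  have U: "uint \<kappa> p = F (sin p) - F 0" if s: "sin p \<in> ball 0 1" for p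
  proof -
    have "path_image (linepath 0 (sin p)) \<subseteq> ball 0 1"
      using s closed_segment_subset[of 0 "ball 0 1" "sin p"] by simp
    from contour_integral_primitive[OF F valid_path_linepath this]
    have "(ff \<kappa> has_contour_integral (F (sin p) - F 0)) (linepath 0 (sin p))" by simp
    hence "contour_integral (linepath 0 (sin p)) (ff \<kappa>) = F (sin p) - F 0"
      by (rule contour_integral_unique)
    thus ?thesis unfolding uint_def ff_def .
  qed
  show ?thesis by (rule that[OF F' U])
qed




theorem theorem1:
  fixes \<kappa> :: real and r :: real and \<phi> \<psi> :: "complex \<Rightarrow> complex"
  assumes "0 < \<kappa>" and "\<kappa> < 1"
    and "0 < r"
    and "\<phi> holomorphic_on ball 0 r" and "\<phi> 0 = 0"
    and "\<And>u. u \<in> ball 0 r \<Longrightarrow> uint \<kappa> (\<phi> u) = u"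
    and "\<psi> holomorphic_on ball 0 r" and "\<psi> 0 = 0"
    and "\<And>u. u \<in> ball 0 r \<Longrightarrow> sin (\<psi> u) = complex_of_real \<kappa> * sin (\<phi> u)"
  shows "\<exists>e>0. \<forall>u\<in>ball 0 e. deriv \<phi> u = cos (\<psi> u) / cos (2/3 * \<psi> u)"
proof -
  obtain \<rho> where \<rho>: "\<rho> > 0" "\<forall>z\<in>ball 0 \<rho>. norm (sin z ^ 2) < 1 \<and> PP z = cos (2/3 * z)"
    using hyp_identity by blast
  obtain F where F1: "\<And>x. x \<in> ball 0 1 \<Longrightarrow> (F has_field_derivative ff \<kappa> x) (at x)"
    and F2: "\<And>p. sin p \<in> ball 0 1 \<Longrightarrow> uint \<kappa> p = F (sin p) - F 0"
    using uint_prim[OF assms(1,2)] by blast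
  have c\<phi>: "continuous_on (ball 0 r) \<phi>" by (rule holomorphic_on_imp_continuous_on[OF assms(4)])
  have c\<psi>: "continuous_on (ball 0 r) \<psi>" by (rule holomorphic_on_imp_continuous_on[OF assms(7)])
  define T1 where "T1 = {z::complex. norm (sin z) < 1 \<and> 0 < Re (cos z)}"
  define T2 where "T2 = {z::complex. norm z < \<rho> \<and> cos z \<noteq> 0 \<and> cos (2/3*z) \<noteq> 0}"
  have oT1: "open T1" unfolding T1_def
    by (intro open_Collect_conj open_Collect_less continuous_intros)
  have oT2: "open T2" unfolding T2_def
    by (intro open_Collect_conj open_Collect_less open_Collect_neq continuous_intros)
  define U where "U = (ball 0 r \<inter> \<phi> -` T1) \<inter> (ball 0 r \<inter> \<psi> -` T2)"
  have oU: "open U" unfolding U_def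
    by (intro open_Int continuous_open_preimage c\<phi> c\<psi> oT1 oT2 open_ball)
  have "0 \<in> U" unfolding U_def T1_def T2_def using assms(3,5,8) \<rho>(1) by simp
  then obtain e where e: "e > 0" "ball 0 e \<subseteq> U" using oU openE by blast
  show ?thesis
  proof (intro exI[of _ e] conjI ballI e(1))
    fix u :: complex assume u: "u \<in> ball 0 e"
    have inU: "v \<in> ball 0 r" "\<phi> v \<in> T1" "\<psi> v \<in> T2" if "v \<in> ball 0 e" for v
      using e(2) that unfolding U_def by blast+
    have ur: "u \<in> ball 0 r" using inU(1)[OF u] .
    have sb: "sin (\<phi> v) \<in> ball 0 1" if "v \<in> ball 0 e" for v
      using inU(2)[OF that] unfolding T1_def by simp
    have eqv: "F (sin (\<phi> v)) = v + F 0" if "v \<in> ball 0 e" for v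
      using F2[OF sb[OF that]] assms(6)[OF inU(1)[OF that]] by (metis diff_add_cancel)
    have d\<phi>: "(\<phi> has_field_derivative deriv \<phi> u) (at u)"
      by (rule holomorphic_derivI[OF assms(4) open_ball ur])
    have ds: "((\<lambda>v. sin (\<phi> v)) has_field_derivative cos (\<phi> u) * deriv \<phi> u) (at u)"
      by (rule DERIV_chain2[OF DERIV_sin d\<phi>])
    have dG: "((\<lambda>v. F (sin (\<phi> v))) has_field_derivative ff \<kappa> (sin (\<phi> u)) * (cos (\<phi> u) * deriv \<phi> u)) (at u)"
      by (rule DERIV_chain2[OF F1[OF sb[OF u]] ds])
    have dG2: "((\<lambda>v. v + F 0) has_field_derivative ff \<kappa> (sin (\<phi> u)) * (cos (\<phi> u) * deriv \<phi> u)) (at u)"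
      by (rule has_field_derivative_transform_within_open[OF dG open_ball u eqv])
    have dI: "((\<lambda>v. v + F 0) has_field_derivative 1) (at u)"
      using DERIV_add[OF DERIV_ident DERIV_const] by simp
    have one: "ff \<kappa> (sin (\<phi> u)) * (cos (\<phi> u) * deriv \<phi> u) = 1"
      by (rule DERIV_unique[OF dG2 dI])
    have T1u: "0 < Re (cos (\<phi> u))" using inU(2)[OF u] unfolding T1_def by simp
    have T2u: "norm (\<psi> u) < \<rho>" "cos (\<psi> u) \<noteq> 0" "cos (2/3 * \<psi> u) \<noteq> 0"
      using inU(3)[OF u] unfolding T2_def by simp_all
    have cphi: "cos (\<phi> u) \<noteq> 0" using T1u by auto
    have sq: "(complex_of_real \<kappa>)\<^sup>2 * (sin (\<phi> u))\<^sup>2 = (sin (\<psi> u))\<^sup>2"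
      using assms(9)[OF ur] by (simp add: power_mult_distrib)
    have cs: "csqrt (1 - (sin (\<phi> u))\<^sup>2) = cos (\<phi> u)"
      by (rule csqrt_unique) (use T1u cos_squared_eq[of "\<phi> u"] in simp_all)
    have PPu: "PP (\<psi> u) = cos (2/3 * \<psi> u)" using \<rho>(2) T2u(1) by simp
    hence Hu: "H ((sin (\<psi> u))\<^sup>2) = cos (2/3 * \<psi> u) / cos (\<psi> u)"
      unfolding PP_def using T2u(2) by (simp add: field_simps)
    have "ff \<kappa> (sin (\<phi> u)) = cos (2/3 * \<psi> u) / cos (\<psi> u) / cos (\<phi> u)"
      unfolding ff_H sq cs Hu ..
    with one have "cos (2/3 * \<psi> u) / cos (\<psi> u) / cos (\<phi> u) * (cos (\<phi> u) * deriv \<phi> u) = 1" by simp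
    with cphi T2u(2,3) show "deriv \<phi> u = cos (\<psi> u) / cos (2/3 * \<psi> u)"
      by (simp add: field_simps)
  qed
qed


end
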